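(* For every positive integer $r$ and indices $a_1,b_1,\dots,b_r\in\{1,\dots,n\}$, the following holds in $\mathcal{M}=\bar A/J$: $$\partial_{a_1}x^{b_1}x^{b_2}\cdots x^{b_r}+J=\sum_{c_2,\dots,c_r}S^{b_1b_2\cdots b_r}_{a_1c_2\cdots c_r}(H+r-1)\,x^{c_2}x^{c_3}\cdots x^{c_r}+J,$$ where $S$ is defined by $S_a^b(K)=\delta_a^b$ and, for $r\ge2$, $$S^{b_1\cdots b_r}_{a_1\cdots a_r}(K)=\delta^{b_1}_{a_1}\cdots\delta^{b_r}_{a_r}+\sum_tR^{b_1t}_{a_1a_2}(K-r+1)\,S^{b_2\cdots b_r}_{ta_3\cdots a_r}(K),$$ equivalently $S^{b_1\cdots b_r}_{a_1\cdots a_r}(H)=\delta^{b_1}_{a_1}\cdots\delta^{b_r}_{a_r}+R^{b_1c_2}_{a_1a_2}(H-r+1)\delta^{b_2}_{c_2}\delta^{b_3}_{a_3}\cdots\delta^{b_r}_{a_r}+R^{b_1c_2}_{a_1a_2}(H-r+1)R^{b_2c_3}_{c_2a_3}(H-r+2)\delta^{b_3}_{c_3}\delta^{b_4}_{a_4}\cdots\delta^{b_r}_{a_r}+\cdots+R^{b_1c_2}_{a_1a_2}(H-r+1)\cdots R^{b_{r-1}b_r}_{c_{r-1}a_r}(H-1)$ (summing over repeated indices).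
   Context: $W_\eta(2n)$ is the unital associative $\mathbb{C}$-algebra generated by $x^a,\partial_a$ ($a=1,\dots,n$) and central $\eta_{ab},\eta^{ab}$ with $x^ax^b=x^bx^a$, $\partial_a\partial_b=\partial_b\partial_a$, $\partial_ax^b-x^b\partial_a=\delta_a^b$, $\eta_{ab}=\eta_{ba}$, $\sum_b\eta_{ab}\eta^{bc}=\delta_a^c$; $n\ge3$. Repeated upper/lower indices are summed; $x_a=\eta_{ab}x^b$, $\partial^a=\eta^{ab}\partial_b$, $E=\frac i2\partial_a\partial^a$, $F=\frac i2x_ax^a$, $H=-\frac12(x^a\partial_a+\partial_ax^a)$. $A$ is the localization of $W_\eta(2n)$ at nonzero polynomials in $H$; $\mathrm{II}=AE+FA$; $\bar A=A/\mathrm{II}$ with product $\bar w\diamond\bar z=\overline{\sum_{k\ge0}\frac1{k!}(\operatorname{ad}F)^k(w)\psi_k(H)^{-1}(\operatorname{ad}E)^k(z)}$, $(\operatorname{ad}X)(y)=Xy-yX$, $\psi_0=1$, $\psi_k(H)=\prod_{j=1}^k(H+1+j-2k)$. In $\bar A$ bars are dropped and $\diamond$ is written as juxtaposition; elements $g(H)\in\mathbb{C}[\eta](H)$ are identified with their classes, and $x^a g(H)=g(H+1)x^a$, $\partial_a g(H)=g(H-1)\partial_a$ in $\bar A$. The rational dynamical $R$-matrix is $R^{bd}_{ac}(H)=\delta^b_c\delta^d_a+\eta_{ac}\eta^{bd}\frac1{H+1}$, so that $\partial_ax^b=\delta_a^b+R^{bd}_{ac}(H)x^c\partial_d$ in $\bar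 A$. $J=\sum_a\bar A\,\partial_a$ is the left ideal generated by the $\partial_a$, and $\mathcal{M}=\bar A/J$. *)

theory Defs
  imports Main
begin

definition kd :: "nat \<Rightarrow> nat \<Rightarrow> 'r::ring_1" where
  "kd i j = (if i = j then 1 else 0)"

text \<open>Two-sided inverse of a ring element (meaningful when it exists).\<close>
definition rinv :: "'r::ring_1 \<Rightarrow> 'r" where
  "rinv y = (THE z. y * z = 1 \<and> z * y = 1)"

text \<open>Rational dynamical R-matrix:
  R^{bd}_{ac}(K) = delta^b_c delta^d_a + eta_{ac} eta^{bd} (K+1)^{-1}.
  Arguments in the order b d a c.\<close>
definition Rmat :: "(nat \<Rightarrow> nat \<Rightarrow> 'r::ring_1) \<Rightarrow> (nat \<Rightarrow> nat \<Rightarrow> 'r) \<Rightarrow>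
    nat \<Rightarrow> nat \<Rightarrow> nat \<Rightarrow> nat \<Rightarrow> 'r \<Rightarrow> 'r" where
  "Rmat etal etau b d a c K = kd b c * kd d a + etal a c * etau b d * rinv (K + 1)"

text \<open>S^{b_1...b_r}_{a_1...a_r}(K), upper indices first (list bs), lower indices second (list as).
  For r = length bs + 2 the shift K - r + 1 equals K - (length bs + 1).\<close>
fun Smat :: "nat \<Rightarrow> (nat \<Rightarrow> nat \<Rightarrow> 'r::ring_1) \<Rightarrow> (nat \<Rightarrow> nat \<Rightarrow> 'r) \<Rightarrow>
    nat list \<Rightarrow> nat list \<Rightarrow> 'r \<Rightarrow> 'r" where
  "Smat n etal etau [b] [a] K = kd a b"
| "Smat n etal etau (b1 # b2 # bs) (a1 # a2 # as) K =
     prod_list (map (\<lambda>(a, b). kd a b) (zip (a1 # a2 # as) (b1 # b2 # bs)))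
     + (\<Sum>t\<in>{1..n}. Rmat etal etau b1 t a1 a2 (K - of_nat (length bs + 1))
                      * Smat n etal etau (b2 # bs) (t # as) K)"
| "Smat n etal etau _ _ K = 0"

end

theory Submission
  imports Defs
begin


lemma prodkd: "length cs = length bs \<Longrightarrow>
  prod_list (map (\<lambda>(a, b). kd a b) (zip cs bs)) = (if cs = bs then (1::'r::ring_1) else 0)"
proof (induction cs arbitrary: bs)
  case Nil then show ?case by simp
next
  case (Cons c cs)
  then obtain b bs' where "bs = b # bs'" by (cases bs) auto
  with Cons show ?case by (auto simp: kd_def)
qed

lemma prodkd_comm: "prod_list (map (\<lambda>(a, b). kd a b) zs) * (y::'r::ring_1) = y * prod_list (map (\<lambda>(a, b). kd a b) zs)"
proof (induction zs)
  case Nil then show ?case by simp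
next
  case (Cons z zs)
  then show ?case by (cases z) (auto simp: kd_def mult.assoc)
qed

lemma rinv_unique: assumes "y * z = 1" "z * y = (1::'r::ring_1)" shows "rinv y = z"
proof -
  have "(THE z. y * z = 1 \<and> z * y = 1) = z"
  proof (rule the_equality)
    show "y * z = 1 \<and> z * y = 1" using assms by simp
    fix w assume w: "y * w = 1 \<and> w * y = 1"
    then have "w = w * (y * z)" using assms by simp
    also have "... = (w*y)*z" by (simp add: mult.assoc)
    also have "... = z" using w by simp
    finally show "w = z" .
  qed
  then show ?thesis by (simp add: rinv_def)
qed

definition inL :: "nat \<Rightarrow> (nat \<Rightarrow> 'r::ring_1) \<Rightarrow> 'r \<Rightarrow> bool" where
  "inL n d u = (\<exists>y. u = (\<Sum>a\<in>{1..n}. y a * d a))"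

lemma inL_0: "inL n d 0" unfolding inL_def by (rule exI[of _ "\<lambda>_. 0"]) simp

lemma inL_add: assumes "inL n d u" "inL n d v" shows "inL n d (u + v)"
proof -
  obtain y1 y2 where "u = (\<Sum>a\<in>{1..n}. y1 a * d a)" "v = (\<Sum>a\<in>{1..n}. y2 a * d a)"
    using assms unfolding inL_def by blast
  then show ?thesis unfolding inL_def
    by (intro exI[of _ "\<lambda>a. y1 a + y2 a"]) (simp add: distrib_right sum.distrib)
qed

lemma inL_lmult: assumes "inL n d u" shows "inL n d (w * u)"
proof -
  obtain y where "u = (\<Sum>a\<in>{1..n}. y a * d a)"
    using assms unfolding inL_def by blast
  then show ?thesis unfolding inL_def
    by (intro exI[of _ "\<lambda>a. w * y a"]) (simp add: sum_distrib_left mult.assoc)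
qed

lemma inL_sum: "finite S \<Longrightarrow> (\<forall>i\<in>S. inL n d (f i)) \<Longrightarrow> inL n d (\<Sum>i\<in>S. f i)"
  by (induction S rule: finite_induct) (auto intro: inL_add inL_0)

lemma sum_lists_Suc:
  assumes "finite A"
  shows "(\<Sum>cs\<in>{cs. length cs = Suc m \<and> set cs \<subseteq> A}. g cs)
       = (\<Sum>c\<in>A. \<Sum>cs\<in>{cs. length cs = m \<and> set cs \<subseteq> A}. g (c # cs))"
proof -
  let ?B = "{cs. length cs = m \<and> set cs \<subseteq> A}"
  have eq: "{cs. length cs = Suc m \<and> set cs \<subseteq> A} = (\<lambda>(c,cs). c#cs) ` (A \<times> ?B)"
    by (auto simp: length_Suc_conv image_iff)
  have inj: "inj_on (\<lambda>(c,cs). c#cs) (A \<times> ?B)" by (auto simp: inj_on_def)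
  have fB: "finite ?B" using finite_lists_length_eq[OF assms, of m] by (simp add: conj_commute)
  show ?thesis
    unfolding eq sum.reindex[OF inj] sum.cartesian_product by (simp add: split_def)
qed


context
  fixes n :: nat and etal etau :: "nat \<Rightarrow> nat \<Rightarrow> 'r::ring_1" and x d :: "nat \<Rightarrow> 'r" and H :: 'r
  assumes etal_central: "\<forall>a b y. etal a b * y = y * etal a b"
    and etau_central: "\<forall>a b y. etau a b * y = y * etau a b"
    and H_inv: "\<forall>k::int. \<exists>z. (H + of_int k) * z = 1 \<and> z * (H + of_int k) = 1"
    and x_H: "\<forall>a\<in>{1..n}. x a * H = (H + 1) * x a"
    and d_x: "\<forall>a\<in>{1..n}. \<forall>b\<in>{1..n}.
               d a * x b = kd a b
                 + (\<Sum>c\<in>{1..n}. \<Sum>e\<in>{1..n}. Rmat etal etau b e a c H * x c * d e)"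
begin

lemma x_K: "c \<in> {1..n} \<Longrightarrow> x c * (H + of_int k) = (H + of_int k + 1) * x c"
proof -
  assume c: "c \<in> {1..n}"
  have "x c * (H + of_int k) = x c * H + x c * of_int k" by (simp add: distrib_left)
  also have "... = (H + 1) * x c + of_int k * x c" using x_H c mult_of_int_commute[of k "x c"] by simp
  also have "... = (H + of_int k + 1) * x c" by (simp add: distrib_right algebra_simps)
  finally show ?thesis .
qed

lemma rinv_H: "(H + of_int k) * rinv (H + of_int k) = 1 \<and> rinv (H + of_int k) * (H + of_int k) = 1"
proof -
  obtain z where "(H + of_int k) * z = 1" "z * (H + of_int k) = 1" using H_inv by blast
  then show ?thesis using rinv_unique by metis
qed

lemma x_rinv: "c \<in> {1..n} \<Longrightarrow> x c * rinv (H + of_int k) = rinv (H + of_int k + 1) * x c"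
proof -
  assume c: "c \<in> {1..n}"
  define z where "z = rinv (H + of_int k)"
  define w where "w = rinv (H + of_int k + 1)"
  have w1: "w * (H + of_int k + 1) = 1" using rinv_H[of "k+1"] unfolding w_def by (simp add: add.assoc)
  have z1: "(H + of_int k) * z = 1" using rinv_H[of k] unfolding z_def by simp
  have "x c * z = w * (H + of_int k + 1) * x c * z" using w1 by simp
  also have "... = w * (x c * (H + of_int k)) * z" using x_K[OF c, of k] by (simp add: mult.assoc)
  also have "... = w * x c" using z1 by (simp add: mult.assoc)
  finally show ?thesis unfolding z_def w_def .
qed

lemma eta_comm: "etal a b * etau b' d' * y = y * (etal a b * etau b' d')"
proof -
  have "etal a b * etau b' d' * y = etal a b * (etau b' d' * y)" by (simp only: mult.assoc)
  also have "... = etal a b * (y * etau b' d')" using etau_central by simp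
  also have "... = (etal a b * y) * etau b' d'" by (simp only: mult.assoc)
  also have "... = y * (etal a b * etau b' d')" using etal_central by (simp only: mult.assoc)
  finally show ?thesis .
qed

lemma x_Rmat: "c \<in> {1..n} \<Longrightarrow> x c * Rmat etal etau b e a c' (H + of_int k) = Rmat etal etau b e a c' (H + of_int k + 1) * x c"
proof -
  assume c: "c \<in> {1..n}"
  have r: "x c * rinv (H + of_int k + 1) = rinv (H + of_int k + 1 + 1) * x c"
    using x_rinv[OF c, of "k+1"] by (simp add: add.assoc)
  have "x c * (etal a c' * etau b e * rinv (H + of_int k + 1)) = etal a c' * etau b e * (x c * rinv (H + of_int k + 1))"
  proof -
    have "x c * (etal a c' * etau b e * rinv (H + of_int k + 1)) = (x c * (etal a c' * etau b e)) * rinv (H + of_int k + 1)"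
      by (simp only: mult.assoc)
    also have "... = (etal a c' * etau b e * x c) * rinv (H + of_int k + 1)" by (simp only: eta_comm)
    also have "... = etal a c' * etau b e * (x c * rinv (H + of_int k + 1))" by (simp only: mult.assoc)
    finally show ?thesis .
  qed
  also have "... = etal a c' * etau b e * rinv (H + of_int k + 1 + 1) * x c" using r by (simp add: mult.assoc)
  finally have e: "x c * (etal a c' * etau b e * rinv (H + of_int k + 1)) = etal a c' * etau b e * rinv (H + of_int k + 1 + 1) * x c" .
  have k: "x c * (kd b c' * kd e a) = kd b c' * kd e a * x c" by (simp add: kd_def)
  show ?thesis unfolding Rmat_def distrib_left distrib_right e k by simp
qed

lemma x_Smat_aux: "etal' = etal \<Longrightarrow> etau' = etau \<Longrightarrow> c \<in> {1..n} \<Longrightarrow> K = H + of_int k \<Longrightarrow> x c * Smat n' etal' etau' bs as K = Smat n' etal' etau' bs as (K + 1) * x c"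
proof (induction n' etal' etau' bs as K arbitrary: k rule: Smat.induct)
  case (1 n etal etau b a K)
  then show ?case by (simp add: kd_def)
next
  case (2 n' etal' etau' b1 b2 bs a1 a2 as K)
  define j where "j = length bs + 1"
  have Kj: "K - of_nat j = H + of_int (k - int j)" using 2 by simp
  have Kj1: "K + 1 - of_nat j = H + of_int (k - int j) + 1" using Kj by (simp add: algebra_simps)
  have IH: "x c * Smat n' etal' etau' (b2 # bs) (t # as) K = Smat n' etal' etau' (b2 # bs) (t # as) (K + 1) * x c" if "t \<in> {1..n'}" for t
    using 2 that by blast
  have R: "x c * Rmat etal etau b1 t a1 a2 (K - of_nat j) = Rmat etal etau b1 t a1 a2 (K + 1 - of_nat j) * x c" for t
    unfolding Kj Kj1 using x_Rmat[OF 2(4)] .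
  have T: "x c * (Rmat etal etau b1 t a1 a2 (K - of_nat j) * Smat n' etal' etau' (b2 # bs) (t # as) K)
      = Rmat etal etau b1 t a1 a2 (K + 1 - of_nat j) * Smat n' etal' etau' (b2 # bs) (t # as) (K + 1) * x c" if "t \<in> {1..n'}" for t
  proof -
    have "x c * (Rmat etal etau b1 t a1 a2 (K - of_nat j) * Smat n' etal' etau' (b2 # bs) (t # as) K)
       = (x c * Rmat etal etau b1 t a1 a2 (K - of_nat j)) * Smat n' etal' etau' (b2 # bs) (t # as) K" by (simp only: mult.assoc)
    also have "... = Rmat etal etau b1 t a1 a2 (K + 1 - of_nat j) * (x c * Smat n' etal' etau' (b2 # bs) (t # as) K)"
      by (simp only: R mult.assoc)
    also have "... = Rmat etal etau b1 t a1 a2 (K + 1 - of_nat j) * Smat n' etal' etau' (b2 # bs) (t # as) (K + 1) * x c"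
      by (simp only: IH[OF that] mult.assoc)
    finally show ?thesis .
  qed
  let ?P = "prod_list (map (\<lambda>(a, b). kd a b) (zip (a1 # a2 # as) (b1 # b2 # bs)))"
  have "x c * (?P + (\<Sum>t\<in>{1..n'}. Rmat etal etau b1 t a1 a2 (K - of_nat j) * Smat n' etal' etau' (b2 # bs) (t # as) K))
      = x c * ?P + (\<Sum>t\<in>{1..n'}. x c * (Rmat etal etau b1 t a1 a2 (K - of_nat j) * Smat n' etal' etau' (b2 # bs) (t # as) K))"
    by (simp only: distrib_left sum_distrib_left)
  also have "... = ?P * x c + (\<Sum>t\<in>{1..n'}. Rmat etal etau b1 t a1 a2 (K + 1 - of_nat j) * Smat n' etal' etau' (b2 # bs) (t # as) (K + 1) * x c)"
  proof -
    have s: "(\<Sum>t\<in>{1..n'}. x c * (Rmat etal etau b1 t a1 a2 (K - of_nat j) * Smat n' etal' etau' (b2 # bs) (t # as) K))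
      = (\<Sum>t\<in>{1..n'}. Rmat etal etau b1 t a1 a2 (K + 1 - of_nat j) * Smat n' etal' etau' (b2 # bs) (t # as) (K + 1) * x c)"
      by (rule sum.cong[OF refl T])
    show ?thesis by (simp only: s prodkd_comm)
  qed
  also have "... = (?P + (\<Sum>t\<in>{1..n'}. Rmat etal etau b1 t a1 a2 (K + 1 - of_nat j) * Smat n' etal' etau' (b2 # bs) (t # as) (K + 1))) * x c"
    by (simp only: distrib_right sum_distrib_right)
  finally show ?case
    unfolding Smat.simps j_def[symmetric] 2(2) 2(3) .
qed simp_all

lemma x_Smat: "c \<in> {1..n} \<Longrightarrow> x c * Smat n etal etau bs as (H + of_nat m) = Smat n etal etau bs as (H + of_nat (Suc m)) * x c"
proof -
  assume c: "c \<in> {1..n}"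
  have e: "H + of_nat m + 1 = H + of_nat (Suc m)" by simp
  show ?thesis using x_Smat_aux[of etal etau c "H + of_nat m" "int m" n bs as] c unfolding e by simp
qed


lemma main_step:
  "\<forall>bs a1. length bs = Suc m \<longrightarrow> set bs \<subseteq> {1..n} \<longrightarrow> a1 \<in> {1..n} \<longrightarrow>
     inL n d (d a1 * prod_list (map x bs)
       - (\<Sum>cs\<in>{cs. length cs = m \<and> set cs \<subseteq> {1..n}}.
            Smat n etal etau bs (a1 # cs) (H + of_nat m) * prod_list (map x cs)))"
proof (induction m)
  case 0
  show ?case
  proof (intro allI impI)
    fix bs a1 assume l: "length bs = Suc 0" and s: "set bs \<subseteq> {1..n}" and a1: "a1 \<in> {1..n}"
    then obtain b where bs: "bs = [b]" by (auto simp: length_Suc_conv)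
    have b: "b \<in> {1..n}" using s bs by simp
    have L: "{cs. length cs = 0 \<and> set cs \<subseteq> {1..n}} = {[]}" by auto
    have "d a1 * prod_list (map x bs)
       - (\<Sum>cs\<in>{cs. length cs = 0 \<and> set cs \<subseteq> {1..n}}.
            Smat n etal etau bs (a1 # cs) (H + of_nat 0) * prod_list (map x cs))
        = d a1 * x b - kd a1 b" unfolding L bs by simp
    also have "... = (\<Sum>c\<in>{1..n}. \<Sum>e\<in>{1..n}. Rmat etal etau b e a1 c H * x c * d e)"
      using d_x a1 b by simp
    also have "... = (\<Sum>e\<in>{1..n}. (\<Sum>c\<in>{1..n}. Rmat etal etau b e a1 c H * x c) * d e)"
      by (subst sum.swap) (simp add: sum_distrib_right)
    finally show "inL n d (d a1 * prod_list (map x bs)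
       - (\<Sum>cs\<in>{cs. length cs = 0 \<and> set cs \<subseteq> {1..n}}.
            Smat n etal etau bs (a1 # cs) (H + of_nat 0) * prod_list (map x cs)))"
      unfolding inL_def by (rule exI[of _ "\<lambda>e. \<Sum>c\<in>{1..n}. Rmat etal etau b e a1 c H * x c"])
  qed
next
  case (Suc m)
  show ?case
  proof (intro allI impI)
    fix bs a1 assume l: "length bs = Suc (Suc m)" and s: "set bs \<subseteq> {1..n}" and a1: "a1 \<in> {1..n}"
    then obtain b1 b2 bs'' where bs: "bs = b1 # b2 # bs''" by (auto simp: length_Suc_conv)
    define bs' where "bs' = b2 # bs''"
    have lbs'': "length bs'' = m" using l bs by simp
    have lbs': "length bs' = Suc m" using l bs bs'_def by simp
    have sbs': "set bs' \<subseteq> {1..n}" using s bs bs'_def by simp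
    have b1: "b1 \<in> {1..n}" using s bs by simp
    define Ls where "Ls = (\<lambda>m. {cs. length cs = m \<and> set cs \<subseteq> {1..n}})"
    define P where "P = (\<lambda>cs. prod_list (map x cs))"
    define K where "K = H + of_nat (Suc m)"
    define T where "T = (\<lambda>e. \<Sum>cs\<in>Ls m. Smat n etal etau bs' (e # cs) (H + of_nat m) * P cs)"
    define l where "l = (\<lambda>e. d e * P bs' - T e)"
    define R where "R = (\<lambda>c e. Rmat etal etau b1 e a1 c H)"
    have lL: "inL n d (l e)" if "e \<in> {1..n}" for e
      using Suc.IH[rule_format, OF lbs' sbs' that] unfolding l_def T_def Ls_def P_def .
    have fin: "finite (Ls k)" for k
      using finite_lists_length_eq[of "{1..n}" k] unfolding Ls_def by (simp add: conj_commute)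
    have "d a1 * P bs = d a1 * x b1 * P bs'" unfolding P_def bs bs'_def by (simp add: mult.assoc)
    also have "... = kd a1 b1 * P bs' + (\<Sum>c\<in>{1..n}. \<Sum>e\<in>{1..n}. R c e * x c * (d e * P bs'))"
      using d_x a1 b1 unfolding R_def by (simp add: distrib_right sum_distrib_right mult.assoc)
    also have "... = kd a1 b1 * P bs' + (\<Sum>c\<in>{1..n}. \<Sum>e\<in>{1..n}. R c e * x c * T e)
                 + (\<Sum>c\<in>{1..n}. \<Sum>e\<in>{1..n}. R c e * x c * l e)"
    proof -
      have dl: "d e * P bs' = T e + l e" for e unfolding l_def by simp
      show ?thesis by (simp only: dl distrib_left sum.distrib add.assoc)
    qed
    finally have E1: "d a1 * P bs = kd a1 b1 * P bs' + (\<Sum>c\<in>{1..n}. \<Sum>e\<in>{1..n}. R c e * x c * T e)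
                 + (\<Sum>c\<in>{1..n}. \<Sum>e\<in>{1..n}. R c e * x c * l e)" .
    have inl: "inL n d (\<Sum>c\<in>{1..n}. \<Sum>e\<in>{1..n}. R c e * x c * l e)"
      by (intro inL_sum ballI inL_lmult lL) auto
    have E2: "R c e * x c * T e = (\<Sum>cs\<in>Ls m. R c e * Smat n etal etau bs' (e # cs) K * (x c * P cs))"
      if c: "c \<in> {1..n}" for c e
    proof -
      have "R c e * x c * T e = (\<Sum>cs\<in>Ls m. R c e * (x c * Smat n etal etau bs' (e # cs) (H + of_nat m)) * P cs)"
        unfolding T_def by (simp add: sum_distrib_left mult.assoc)
      also have "... = (\<Sum>cs\<in>Ls m. R c e * Smat n etal etau bs' (e # cs) K * (x c * P cs))"
        unfolding x_Smat[OF c] K_def by (simp add: mult.assoc)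
      finally show ?thesis .
    qed
    have Sm: "Smat n etal etau bs (a1 # cs) K = prod_list (map (\<lambda>(a, b). kd a b) (zip (a1 # cs) bs))
        + (\<Sum>t\<in>{1..n}. R (hd cs) t * Smat n etal etau bs' (t # tl cs) K)" if "cs \<in> Ls (Suc m)" for cs
    proof -
      have "length cs = Suc m" using that unfolding Ls_def by simp
      then obtain c cs' where cs: "cs = c # cs'" by (cases cs) auto
      have "K - of_nat (length bs'' + 1) = H" unfolding K_def lbs'' by simp
      then show ?thesis unfolding cs bs bs'_def R_def by simp
    qed
    have D: "(\<Sum>cs\<in>Ls (Suc m). prod_list (map (\<lambda>(a, b). kd a b) (zip (a1 # cs) bs)) * P cs) = kd a1 b1 * P bs'"
    proof -
      have "(\<Sum>cs\<in>Ls (Suc m). prod_list (map (\<lambda>(a, b). kd a b) (zip (a1 # cs) bs)) * P cs)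
          = (\<Sum>cs\<in>Ls (Suc m). if cs = bs' then kd a1 b1 * P bs' else 0)"
      proof (rule sum.cong[OF refl])
        fix cs assume "cs \<in> Ls (Suc m)"
        then have "length (a1 # cs) = length bs" using l unfolding Ls_def by simp
        then have pk: "prod_list (map (\<lambda>(a, b). kd a b) (zip (a1 # cs) bs)) = (if a1 # cs = bs then 1 else 0)"
          by (rule prodkd)
        show "prod_list (map (\<lambda>(a, b). kd a b) (zip (a1 # cs) bs)) * P cs = (if cs = bs' then kd a1 b1 * P bs' else 0)"
          unfolding pk by (auto simp: bs bs'_def kd_def)
      qed
      also have "... = kd a1 b1 * P bs'" using fin[of "Suc m"] lbs' sbs' by (simp add: Ls_def)
      finally show ?thesis .
    qed
    have Tg: "(\<Sum>cs\<in>Ls (Suc m). (\<Sum>t\<in>{1..n}. R (hd cs) t * Smat n etal etau bs' (t # tl cs) K) * P cs)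
        = (\<Sum>c\<in>{1..n}. \<Sum>e\<in>{1..n}. R c e * x c * T e)"
    proof -
      have "(\<Sum>cs\<in>Ls (Suc m). (\<Sum>t\<in>{1..n}. R (hd cs) t * Smat n etal etau bs' (t # tl cs) K) * P cs)
          = (\<Sum>c\<in>{1..n}. \<Sum>cs\<in>Ls m. (\<Sum>t\<in>{1..n}. R c t * Smat n etal etau bs' (t # cs) K) * (x c * P cs))"
        unfolding Ls_def by (subst sum_lists_Suc) (simp_all add: P_def)
      also have "... = (\<Sum>c\<in>{1..n}. \<Sum>e\<in>{1..n}. \<Sum>cs\<in>Ls m. R c e * Smat n etal etau bs' (e # cs) K * (x c * P cs))"
        by (simp add: sum_distrib_right sum.swap[of _ "Ls m"])
      also have "... = (\<Sum>c\<in>{1..n}. \<Sum>e\<in>{1..n}. R c e * x c * T e)"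
        using E2 by simp
      finally show ?thesis .
    qed
    have "(\<Sum>cs\<in>Ls (Suc m). Smat n etal etau bs (a1 # cs) K * P cs)
        = (\<Sum>cs\<in>Ls (Suc m). prod_list (map (\<lambda>(a, b). kd a b) (zip (a1 # cs) bs)) * P cs)
          + (\<Sum>cs\<in>Ls (Suc m). (\<Sum>t\<in>{1..n}. R (hd cs) t * Smat n etal etau bs' (t # tl cs) K) * P cs)"
      by (simp add: Sm distrib_right sum.distrib cong: sum.cong)
    also have "... = kd a1 b1 * P bs' + (\<Sum>c\<in>{1..n}. \<Sum>e\<in>{1..n}. R c e * x c * T e)"
      unfolding D Tg ..
    finally have E3: "d a1 * P bs - (\<Sum>cs\<in>Ls (Suc m). Smat n etal etau bs (a1 # cs) K * P cs)
        = (\<Sum>c\<in>{1..n}. \<Sum>e\<in>{1..n}. R c e * x c * l e)"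
      unfolding E1 by simp
    show "inL n d (d a1 * prod_list (map x bs)
       - (\<Sum>cs\<in>{cs. length cs = Suc m \<and> set cs \<subseteq> {1..n}}.
            Smat n etal etau bs (a1 # cs) (H + of_nat (Suc m)) * prod_list (map x cs)))"
      using E3 inl unfolding Ls_def P_def K_def by simp
  qed
qed

end

theorem mainTheorem11:
  fixes n :: nat
    and etal etau :: "nat \<Rightarrow> nat \<Rightarrow> 'r::ring_1"
    and x d :: "nat \<Rightarrow> 'r"
    and H :: 'r
  assumes n3: "n \<ge> 3"
    and etal_central: "\<forall>a b y. etal a b * y = y * etal a b"
    and etau_central: "\<forall>a b y. etau a b * y = y * etau a b"
    and etal_sym: "\<forall>a\<in>{1..n}. \<forall>b\<in>{1..n}. etal a b = etal b a"
    and eta_inv: "\<forall>a\<in>{1..n}. \<forall>c\<in>{1..n}. (\<Sum>b\<in>{1..n}. etal a b * etau b c) = kd a c"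
    and H_inv: "\<forall>k::int. \<exists>z. (H + of_int k) * z = 1 \<and> z * (H + of_int k) = 1"
    and x_H: "\<forall>a\<in>{1..n}. x a * H = (H + 1) * x a"
    and d_H: "\<forall>a\<in>{1..n}. d a * H = (H - 1) * d a"
    and x_comm: "\<forall>a\<in>{1..n}. \<forall>b\<in>{1..n}. x a * x b = x b * x a"
    and d_comm: "\<forall>a\<in>{1..n}. \<forall>b\<in>{1..n}. d a * d b = d b * d a"
    and d_x: "\<forall>a\<in>{1..n}. \<forall>b\<in>{1..n}.
               d a * x b = kd a b
                 + (\<Sum>c\<in>{1..n}. \<Sum>e\<in>{1..n}. Rmat etal etau b e a c H * x c * d e)"
  shows "\<forall>r \<ge> 1. \<forall>a1\<in>{1..n}. \<forall>bs. length bs = r \<and> set bs \<subseteq> {1..n} \<longrightarrow>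
           (\<exists>y :: nat \<Rightarrow> 'r.
              d a1 * prod_list (map x bs)
              - (\<Sum>cs\<in>{cs. length cs = r - 1 \<and> set cs \<subseteq> {1..n}}.
                    Smat n etal etau bs (a1 # cs) (H + of_nat (r - 1)) * prod_list (map x cs))
              = (\<Sum>a\<in>{1..n}. y a * d a))"
  proof (intro allI impI ballI)
  fix r a1 bs
  assume r: "r \<ge> 1" and a1: "a1 \<in> {1..n}" and bs: "length bs = r \<and> set bs \<subseteq> {1..n}"
  obtain m where rm: "r = Suc m" using r by (cases r) auto
  have "inL n d (d a1 * prod_list (map x bs)
       - (\<Sum>cs\<in>{cs. length cs = m \<and> set cs \<subseteq> {1..n}}.
            Smat n etal etau bs (a1 # cs) (H + of_nat m) * prod_list (map x cs)))"
    using main_step[OF etal_central etau_central H_inv x_H d_x, of m] bs a1 rm by blast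
  then show "\<exists>y :: nat \<Rightarrow> 'r.
              d a1 * prod_list (map x bs)
              - (\<Sum>cs\<in>{cs. length cs = r - 1 \<and> set cs \<subseteq> {1..n}}.
                    Smat n etal etau bs (a1 # cs) (H + of_nat (r - 1)) * prod_list (map x cs))
              = (\<Sum>a\<in>{1..n}. y a * d a)"
    unfolding inL_def rm by simp
qed

end
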